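(* Let $A\in\mathbb{R}^{m\times n}$, $b\in\mathbb{R}^m$. Let $H=AA^T$, or, if $A$ is (square) symmetric positive semidefinite, $H=A$. Let $\lambda_{\max}$, $\kappa^+$ and $c(H)=1/(\kappa^+\lambda_{\max})$ be as in the context. Given $w_0\in\mathbb{R}^m$, set $x_0=A^Tw_0$, $r_0=b-Ax_0$, and for $k\ge1$ (as long as $Hr_{k-1}\ne0$) set $r_k=F_1(r_{k-1})$ and $$x_k=x_{k-1}+\alpha_{1,1}(r_{k-1})\,r_{k-1}\ \text{ if } H=A,\qquad x_k=x_{k-1}+\alpha_{1,1}(r_{k-1})\,A^Tr_{k-1}\ \text{ if } H=AA^T,$$ where $\alpha_{1,1}(r)=r^THr/r^TH^2r$. Suppose $k\ge1$ and $Hr_j\neq0$ for $j=0,\dots,k-1$. Then: (I) $r_k=b-Ax_k$. (II) If $Ax=b$ is solvable, $\|r_k\|\le\left(\frac{\kappa^+-1}{\kappa^++1}\right)^k\|r_0\|$. (III) If $Ax=b$ is solvable and $\varepsilon\in(0,1)$, then $\|r_k\|\le\varepsilon$ whenever $k\ge\kappa^+\ln(\|r_0\|/\varepsilon)$. (IV) Regardless of solvability, $\|r_k\|^2\le\|r_0\|^2-c(H)\sum_{j=0}^{k-1}r_j^THr_j$. (V) Regardless of solvability, if $\varepsilon\in(0,1)$ and $r_j^THr_j>\varepsilon$ for all $j=0,\dots,k-1$, then $k\le\kappa^+\lambda_{\max}\|r_0\|^2/\varepsilon$. (VI) If $\|r_k\|\le\varepsilon$ then $\|Ax_k-b\|\le\varepsilon$;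 if $r_k^THr_k\le\varepsilon$ then $\|A^TAx_k-A^Tb\|\le\sqrt{\varepsilon}$ when $H=AA^T$, and $\|A^TAx_k-A^Tb\|\le\sqrt{\varepsilon}\,\|A\|^{1/2}$ when $H=A$.
   Context: Norms are Euclidean; $\|A\|$ is the operator 2-norm. $\lambda_{\max}$ is the largest eigenvalue of $H$ and $\kappa^+$ is the ratio of the largest eigenvalue of $H$ to its smallest positive eigenvalue. For $r$ with $Hr\ne0$, $F_1(r)=r-\frac{r^THr}{r^TH^2r}Hr$. *)

theory Defs
  imports "HOL-Analysis.Analysis"
begin

definition eigvals :: "real^'m^'m \<Rightarrow> real set" where
  "eigvals H = {l. \<exists>v. v \<noteq> 0 \<and> H *v v = l *\<^sub>R v}"

definition lambda_max :: "real^'m^'m \<Rightarrow> real" where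
  "lambda_max H = Max (eigvals H)"

definition kappa_plus :: "real^'m^'m \<Rightarrow> real" where
  "kappa_plus H = lambda_max H / Min {l \<in> eigvals H. l > 0}"

definition c_H :: "real^'m^'m \<Rightarrow> real" where
  "c_H H = 1 / (kappa_plus H * lambda_max H)"

definition sym_psd :: "real^'m^'m \<Rightarrow> bool" where
  "sym_psd A \<longleftrightarrow> transpose A = A \<and> (\<forall>x. 0 \<le> x \<bullet> (A *v x))"

definition F1 :: "real^'m^'m \<Rightarrow> real^'m \<Rightarrow> real^'m" where
  "F1 H r = r - ((r \<bullet> (H *v r)) / (r \<bullet> ((H ** H) *v r))) *\<^sub>R (H *v r)"

definition alpha11 :: "real^'m^'m \<Rightarrow> real^'m \<Rightarrow> real" where
  "alpha11 H r = (r \<bullet> (H *v r)) / (r \<bullet> ((H ** H) *v r))"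

primrec resid :: "real^'m^'m \<Rightarrow> real^'m \<Rightarrow> nat \<Rightarrow> real^'m" where
  "resid H r0 0 = r0"
| "resid H r0 (Suc k) = F1 H (resid H r0 k)"

text \<open>Solution iterates x_k = x_{k-1} + alpha_{1,1}(r_{k-1}) D(r_{k-1}),
  with D r = A^T r (case H = A A^T) or D r = r (case H = A).\<close>
primrec iter_x :: "real^'m^'m \<Rightarrow> (real^'m \<Rightarrow> real^'n) \<Rightarrow> real^'n \<Rightarrow> real^'m \<Rightarrow> nat \<Rightarrow> real^'n" where
  "iter_x H D x0 r0 0 = x0"
| "iter_x H D x0 r0 (Suc k) =
     iter_x H D x0 r0 k + alpha11 H (resid H r0 k) *\<^sub>R D (resid H r0 k)"

end

theory Submission
  imports Defs
begin


lemma quad_discr: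
  fixes a b c :: real
  assumes h: "\<And>t. 0 \<le> a + 2*b*t + c*t^2" and c: "0 \<le> c"
  shows "b^2 \<le> a*c"
proof (cases "c = 0")
  case True
  show ?thesis
  proof (rule ccontr)
    assume "\<not> ?thesis"
    then have "b \<noteq> 0" using True by auto
    have "0 \<le> a + 2*b*(-(\<bar>a\<bar>+1)/(2*b)) + c*(-(\<bar>a\<bar>+1)/(2*b))^2" by (rule h)
    also have "\<dots> = a - (\<bar>a\<bar>+1)" using True \<open>b\<noteq>0\<close> by (simp add: field_simps)
    finally show False by linarith
  qed
next
  case False
  then have cp: "c > 0" using c by auto
  have "0 \<le> a + 2*b*(-b/c) + c*(-b/c)^2" by (rule h)
  also have "\<dots> = a - b^2/c" using cp by (simp add: field_simps power2_eq_square)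
  finally have "b^2/c \<le> a" by simp
  then show ?thesis using cp by (simp add: divide_le_eq mult.commute)
qed

locale sadj =
  fixes f :: "'a::euclidean_space \<Rightarrow> 'a"
  assumes lin: "linear f" and sa: "\<And>x y. f x \<bullet> y = x \<bullet> f y"
begin

lemma f_add: "f (x + y) = f x + f y" using lin by (simp add: linear_add)
lemma f_scale: "f (c *\<^sub>R x) = c *\<^sub>R f x" using lin by (simp add: linear_scale)
lemma f_diff: "f (x - y) = f x - f y" using lin by (simp add: linear_diff)

lemma cs_on:
  assumes S: "subspace S" and psd: "\<forall>x\<in>S. 0 \<le> x \<bullet> f x" and x: "x \<in> S" and y: "y \<in> S"
  shows "(y \<bullet> f x)^2 \<le> (y \<bullet> f y) * (x \<bullet> f x)"
proof (rule quad_discr)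
  fix t :: real
  have xy: "x \<bullet> f y = y \<bullet> f x" using sa[of x y] by (simp add: inner_commute)
  have "y + t *\<^sub>R x \<in> S" using S x y by (simp add: subspace_add subspace_scale)
  then have "0 \<le> (y + t *\<^sub>R x) \<bullet> f (y + t *\<^sub>R x)" using psd by blast
  also have "\<dots> = y \<bullet> f y + 2 * (y \<bullet> f x) * t + (x \<bullet> f x) * t^2"
    using xy by (simp add: f_add f_scale inner_add_left inner_add_right power2_eq_square algebra_simps)
  finally show "0 \<le> y \<bullet> f y + 2 * (y \<bullet> f x) * t + (x \<bullet> f x) * t^2" .
next
  show "0 \<le> x \<bullet> f x" using psd x by blast
qed

lemma bound_on:
  assumes S: "subspace S" and psd: "\<forall>x\<in>S. 0 \<le> x \<bullet> f x" and inv: "\<forall>x\<in>S. f x \<in> S"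
    and ub: "\<forall>y\<in>S. y \<bullet> f y \<le> c * (norm y)^2" and c: "0 \<le> c" and x: "x \<in> S"
  shows "(norm (f x))^2 \<le> c * (x \<bullet> f x)"
proof -
  have fx: "f x \<in> S" using inv x by blast
  have "(f x \<bullet> f x)^2 \<le> (f x \<bullet> f (f x)) * (x \<bullet> f x)" by (rule cs_on[OF S psd x fx])
  also have "\<dots> \<le> (c * (norm (f x))^2) * (x \<bullet> f x)"
    using ub fx psd x by (intro mult_right_mono) auto
  finally have h: "((norm (f x))^2)^2 \<le> (norm (f x))^2 * (c * (x \<bullet> f x))"
    by (simp add: power2_norm_eq_inner algebra_simps)
  show ?thesis
  proof (cases "norm (f x) = 0")
    case True then show ?thesis using c psd x by simp
  next
    case False
    then have "(norm (f x))^2 > 0" by simp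
    with h show ?thesis by (simp add: power2_eq_square mult_le_cancel_left)
  qed
qed

lemma zero_on:
  assumes S: "subspace S" and psd: "\<forall>x\<in>S. 0 \<le> x \<bullet> f x" and inv: "\<forall>x\<in>S. f x \<in> S"
    and x: "x \<in> S" and z: "x \<bullet> f x = 0"
  shows "f x = 0"
proof -
  have fx: "f x \<in> S" using inv x by blast
  have "(f x \<bullet> f x)^2 \<le> (f x \<bullet> f (f x)) * (x \<bullet> f x)" by (rule cs_on[OF S psd x fx])
  then show ?thesis using z by simp
qed

end

lemma sadj_shift:
  assumes "sadj f" shows "sadj (\<lambda>x. c *\<^sub>R x - f x)"
proof -
  interpret sadj f by fact
  show ?thesis
    by unfold_locales (auto simp: linear_iff f_add f_scale algebra_simps sa inner_diff_left inner_diff_right)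
qed

lemma sadj_neg:
  assumes "sadj f" shows "sadj (\<lambda>x. - f x)"
proof -
  interpret sadj f by fact
  show ?thesis
    by unfold_locales (auto simp: linear_iff f_add f_scale algebra_simps sa)
qed

lemma (in sadj) rayleigh_max:
  assumes S: "subspace S" and inv: "\<forall>x\<in>S. f x \<in> S" and v0: "v0 \<in> S" "v0 \<noteq> 0"
  shows "\<exists>v\<in>S. v \<noteq> 0 \<and> (\<exists>\<nu>. f v = \<nu> *\<^sub>R v \<and> (\<forall>x\<in>S. x \<bullet> f x \<le> \<nu> * (norm x)^2))"
proof -
  let ?K = "S \<inter> sphere 0 1"
  have cK: "compact ?K" using closed_Int_compact[OF closed_subspace[OF S] compact_sphere] .
  have "v0 /\<^sub>R norm v0 \<in> ?K" using v0 S by (simp add: subspace_scale)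
  then have ne: "?K \<noteq> {}" by blast
  have bl: "bounded_linear f" using lin by (simp add: linear_conv_bounded_linear)
  have "continuous_on ?K (\<lambda>x. x \<bullet> f x)"
    by (intro continuous_intros linear_continuous_on[OF bl])
  from continuous_attains_sup[OF cK ne this] obtain v where v: "v \<in> ?K" and vmax: "\<forall>y\<in>?K. y \<bullet> f y \<le> v \<bullet> f v" by blast
  define \<nu> where "\<nu> = v \<bullet> f v"
  have ub: "\<forall>x\<in>S. x \<bullet> f x \<le> \<nu> * (norm x)^2"
  proof
    fix x assume x: "x \<in> S"
    show "x \<bullet> f x \<le> \<nu> * (norm x)^2"
    proof (cases "x = 0")
      case True then show ?thesis using lin by (simp add: linear_0)
    next
      case False
      have "x /\<^sub>R norm x \<in> ?K" using x S False by (simp add: subspace_scale)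
      then have "(x /\<^sub>R norm x) \<bullet> f (x /\<^sub>R norm x) \<le> \<nu>" using vmax \<nu>_def by blast
      moreover have "(x /\<^sub>R norm x) \<bullet> f (x /\<^sub>R norm x) = (x \<bullet> f x) / (norm x)^2"
        by (simp add: f_scale power2_eq_square divide_inverse mult_ac)
      ultimately have "(x \<bullet> f x) / (norm x)^2 \<le> \<nu>" by simp
      then show ?thesis using False by (simp add: divide_le_eq mult.commute)
    qed
  qed
  interpret g: sadj "\<lambda>x. \<nu> *\<^sub>R x - f x" using sadj_shift[of f \<nu>] sadj_axioms by simp
  have psd: "\<forall>x\<in>S. 0 \<le> x \<bullet> (\<nu> *\<^sub>R x - f x)"
    using ub by (auto simp: inner_diff_right power2_norm_eq_inner)
  have inv2: "\<forall>x\<in>S. \<nu> *\<^sub>R x - f x \<in> S" using inv S by (simp add: subspace_diff subspace_scale)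
  have vS: "v \<in> S" and nv: "norm v = 1" using v by auto
  have "v \<bullet> (\<nu> *\<^sub>R v - f v) = 0"
    using nv by (simp add: inner_diff_right \<nu>_def flip: power2_norm_eq_inner)
  from g.zero_on[OF S psd inv2 vS this] have "f v = \<nu> *\<^sub>R v" by simp
  then show ?thesis using vS nv ub by (intro bexI[of _ v]) auto
qed


lemma msa: "transpose H = H \<Longrightarrow> (H *v x) \<bullet> y = x \<bullet> (H *v (y::real^'m))"
  by (metis dot_lmul_matrix transpose_matrix_vector)

lemma mat_sadj: "transpose (H::real^'m^'m) = H \<Longrightarrow> sadj ((*v) H)"
  unfolding sadj_def by (auto simp: msa)

lemma eig_finite:
  fixes H :: "real^'m^'m"
  assumes sym: "transpose H = H"
  shows "finite (eigvals H)"
proof (rule ccontr)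
  assume "\<not> finite (eigvals H)"
  then obtain T where T: "finite T" "card T = DIM(real^'m) + 1" "T \<subseteq> eigvals H"
    using infinite_arbitrarily_large by blast
  define ev where "ev l = (SOME v. v \<noteq> 0 \<and> H *v v = l *\<^sub>R v)" for l
  have ev: "ev l \<noteq> 0 \<and> H *v ev l = l *\<^sub>R ev l" if "l \<in> T" for l
  proof -
    have "\<exists>v. v \<noteq> 0 \<and> H *v v = l *\<^sub>R v" using that T(3) by (auto simp: eigvals_def)
    then show ?thesis unfolding ev_def by (rule someI_ex)
  qed
  have inj: "inj_on ev T"
  proof (rule inj_onI)
    fix l1 l2 assume l: "l1 \<in> T" "l2 \<in> T" "ev l1 = ev l2"
    then have "l1 *\<^sub>R ev l1 = l2 *\<^sub>R ev l1" using ev[of l1] ev[of l2] by metis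
    then show "l1 = l2" using ev[OF l(1)] by (simp add: scaleR_cancel_right)
  qed
  have orth: "pairwise orthogonal (ev ` T)"
  proof (clarsimp simp: pairwise_def orthogonal_def)
    fix l1 l2 assume l: "l1 \<in> T" "l2 \<in> T" "ev l1 \<noteq> ev l2"
    then have ne: "l1 \<noteq> l2" by auto
    have "l1 * (ev l1 \<bullet> ev l2) = (H *v ev l1) \<bullet> ev l2" using ev[OF l(1)] by simp
    also have "\<dots> = ev l1 \<bullet> (H *v ev l2)" by (rule msa[OF sym])
    also have "\<dots> = l2 * (ev l1 \<bullet> ev l2)" using ev[OF l(2)] by simp
    finally show "ev l1 \<bullet> ev l2 = 0" using ne by simp
  qed
  have "0 \<notin> ev ` T" using ev by auto
  then have "independent (ev ` T)" using pairwise_orthogonal_independent orth by blast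
  then have "card (ev ` T) \<le> DIM(real^'m)" using independent_bound by blast
  moreover have "card (ev ` T) = card T" using card_image[OF inj] .
  ultimately show False using T(2) by simp
qed

lemma lmax_facts:
  fixes H :: "real^'m^'m"
  assumes sym: "transpose H = H" and r: "(r::real^'m) \<noteq> 0"
  shows "\<forall>x. x \<bullet> (H *v x) \<le> lambda_max H * (norm x)^2" "lambda_max H \<in> eigvals H"
proof -
  interpret sadj "(*v) H" by (rule mat_sadj[OF sym])
  obtain v \<nu> where v: "v \<noteq> 0" "H *v v = \<nu> *\<^sub>R v" and ub: "\<forall>x. x \<bullet> (H *v x) \<le> \<nu> * (norm x)^2"
    using rayleigh_max[of UNIV r] r by auto
  have nuin: "\<nu> \<in> eigvals H" using v by (auto simp: eigvals_def)
  have le: "l \<le> \<nu>" if lin: "l \<in> eigvals H" for l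
  proof -
    obtain w where w: "w \<noteq> 0" "H *v w = l *\<^sub>R w" using lin by (auto simp: eigvals_def)
    have "l * (norm w)^2 = w \<bullet> (H *v w)" using w by (simp add: power2_norm_eq_inner)
    also have "\<dots> \<le> \<nu> * (norm w)^2" using ub by blast
    finally show ?thesis using w by simp
  qed
  have "lambda_max H = \<nu>" unfolding lambda_max_def
    by (rule Max_eqI[OF eig_finite[OF sym]]) (use le nuin in auto)
  then show "\<forall>x. x \<bullet> (H *v x) \<le> lambda_max H * (norm x)^2" "lambda_max H \<in> eigvals H"
    using ub nuin by auto
qed

lemma lmin_facts:
  fixes H :: "real^'m^'m"
  assumes sym: "transpose H = H" and psd: "\<forall>x. 0 \<le> x \<bullet> (H *v x)"
    and S: "subspace S" and inv: "\<forall>x\<in>S. H *v x \<in> S" and nf: "\<forall>x\<in>S. H *v x = 0 \<longrightarrow> x = 0"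
    and v0: "v0 \<in> S" "v0 \<noteq> 0"
  shows "\<forall>x\<in>S. Min {l \<in> eigvals H. l > 0} * (norm x)^2 \<le> x \<bullet> (H *v x)"
    "0 < Min {l \<in> eigvals H. l > 0}" "Min {l \<in> eigvals H. l > 0} \<le> lambda_max H"
proof -
  let ?P = "{l \<in> eigvals H. l > 0}"
  interpret sadj "\<lambda>x. - (H *v x)" using sadj_neg[OF mat_sadj[OF sym]] .
  have inv': "\<forall>x\<in>S. - (H *v x) \<in> S" using inv S by (simp add: subspace_neg)
  obtain v \<nu> where v: "v \<in> S" "v \<noteq> 0" "- (H *v v) = \<nu> *\<^sub>R v"
    and ub: "\<forall>x\<in>S. x \<bullet> (- (H *v x)) \<le> \<nu> * (norm x)^2"
    using rayleigh_max[OF S inv' v0] by blast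
  define \<mu> where "\<mu> = - \<nu>"
  have Hv: "H *v v = \<mu> *\<^sub>R v" using v(3) unfolding \<mu>_def by (metis minus_minus scaleR_minus_left)
  have lb: "\<forall>x\<in>S. \<mu> * (norm x)^2 \<le> x \<bullet> (H *v x)" using ub unfolding \<mu>_def by auto
  have vv: "v \<bullet> (H *v v) = \<mu> * (norm v)^2" using Hv by (simp add: power2_norm_eq_inner)
  have "\<mu> \<noteq> 0" using Hv nf v by auto
  moreover have "0 \<le> \<mu>" using vv psd v(2)
    by (metis zero_less_norm_iff zero_le_mult_iff zero_less_power not_le)
  ultimately have mpos: "0 < \<mu>" by simp
  have muP: "\<mu> \<in> ?P" using Hv v mpos by (auto simp: eigvals_def)
  have fin: "finite ?P" using eig_finite[OF sym] by simp
  have "Min ?P \<le> \<mu>" using Min_le[OF fin muP] .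
  moreover have "0 < Min ?P" using Min_in[OF fin] muP by blast
  moreover have "\<mu> \<le> lambda_max H"
  proof -
    have "\<mu> * (norm v)^2 \<le> lambda_max H * (norm v)^2"
      using lmax_facts(1)[OF sym v(2)] vv by metis
    then show ?thesis using v(2) by simp
  qed
  ultimately show "0 < Min ?P" "Min ?P \<le> lambda_max H"
    "\<forall>x\<in>S. Min ?P * (norm x)^2 \<le> x \<bullet> (H *v x)"
    using lb by (auto intro: order_trans[OF mult_right_mono])
qed


lemma HH: "transpose H = H \<Longrightarrow> r \<bullet> ((H ** H) *v r) = (norm (H *v (r::real^'m)))^2"
  by (simp add: msa power2_norm_eq_inner flip: matrix_vector_mul_assoc)

lemma F1_norm:
  fixes H :: "real^'m^'m"
  assumes sym: "transpose H = H"
  shows "(norm (F1 H r))^2 = (norm r)^2 - (r \<bullet> (H *v r))^2 / (norm (H *v r))^2"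
proof (cases "H *v r = 0")
  case True then show ?thesis by (simp add: F1_def)
next
  case False
  define a where "a = r \<bullet> (H *v r)"
  define h where "h = (norm (H *v r))^2"
  have hp: "h > 0" using False h_def by simp
  have ar: "(H *v r) \<bullet> r = a" using a_def by (simp add: inner_commute)
  have "(norm (F1 H r))^2 = (r - (a/h) *\<^sub>R (H *v r)) \<bullet> (r - (a/h) *\<^sub>R (H *v r))"
    unfolding F1_def HH[OF sym] a_def h_def by (simp add: power2_norm_eq_inner)
  also have "\<dots> = r \<bullet> r - 2*(a/h)*a + (a/h)^2 * h"
  proof -
    have hh: "(H *v r) \<bullet> (H *v r) = h" unfolding h_def by (simp add: power2_norm_eq_inner)
    have ra: "r \<bullet> (H *v r) = a" using a_def by simp
    show ?thesis
      by (simp add: inner_diff_left inner_diff_right ar ra hh power2_eq_square algebra_simps)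
  qed
  also have "\<dots> = (norm r)^2 - a^2/h" using hp by (simp add: field_simps power2_eq_square flip: power2_norm_eq_inner)
  finally show ?thesis unfolding a_def h_def .
qed

lemma F1_in:
  assumes S: "subspace S" and inv: "\<forall>x\<in>S. H *v x \<in> S" and r: "r \<in> S"
  shows "F1 H r \<in> S"
  unfolding F1_def using assms by (simp add: subspace_diff subspace_scale)

lemma range_sub:
  fixes H :: "real^'m^'m"
  assumes sym: "transpose H = H"
  shows "subspace (range ((*v) H))" "\<forall>x\<in>range ((*v) H). H *v x \<in> range ((*v) H)"
    "\<forall>x\<in>range ((*v) H). H *v x = 0 \<longrightarrow> x = 0"
proof -
  show "subspace (range ((*v) H))"
    unfolding subspace_def
    by (auto simp: image_iff intro: exI[of _ 0])
       (metis matrix_vector_right_distrib, metis matrix_vector_mult_scaleR)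
  show "\<forall>x\<in>range ((*v) H). H *v x \<in> range ((*v) H)" by auto
  show "\<forall>x\<in>range ((*v) H). H *v x = 0 \<longrightarrow> x = 0"
  proof clarify
    fix y assume "H *v (H *v y) = 0"
    then have "(H *v y) \<bullet> (H *v y) = 0" using msa[OF sym, of y "H *v y"] by simp
    then show "H *v y = 0" by simp
  qed
qed


lemma HM_bound:
  fixes H :: "real^'m^'m"
  assumes sym: "transpose H = H" and psd: "\<forall>x. 0 \<le> x \<bullet> (H *v x)" and r0: "(r0::real^'m) \<noteq> 0"
  shows "(norm (H *v r))^2 \<le> lambda_max H * (r \<bullet> (H *v r))"
proof -
  interpret sadj "(*v) H" by (rule mat_sadj[OF sym])
  have ub: "\<forall>x. x \<bullet> (H *v x) \<le> lambda_max H * (norm x)^2" by (rule lmax_facts(1)[OF sym r0])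
  have "0 \<le> lambda_max H"
  proof -
    have "0 \<le> lambda_max H * (norm r0)^2" using ub psd order_trans by blast
    then show ?thesis using r0 by (simp add: zero_le_mult_iff)
  qed
  then show ?thesis using bound_on[of UNIV "lambda_max H" r] ub psd by auto
qed

lemma consts_facts:
  fixes H :: "real^'m^'m"
  assumes sym: "transpose H = H" and psd: "\<forall>x. 0 \<le> x \<bullet> (H *v x)" and Hr0: "H *v r0 \<noteq> 0"
  shows "0 < Min {l \<in> eigvals H. l > 0}" "Min {l \<in> eigvals H. l > 0} \<le> lambda_max H"
    "kappa_plus H = lambda_max H / Min {l \<in> eigvals H. l > 0}"
    "c_H H = Min {l \<in> eigvals H. l > 0} / (lambda_max H)^2"
    "\<forall>x. x \<bullet> (H *v x) \<le> lambda_max H * (norm x)^2"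
proof -
  note R = range_sub[OF sym]
  have v0: "H *v r0 \<in> range ((*v) H)" by simp
  have r0: "r0 \<noteq> 0" using Hr0 by auto
  note L = lmin_facts[OF sym psd R v0 Hr0]
  show "0 < Min {l \<in> eigvals H. l > 0}" "Min {l \<in> eigvals H. l > 0} \<le> lambda_max H" using L by auto
  show k: "kappa_plus H = lambda_max H / Min {l \<in> eigvals H. l > 0}" by (simp add: kappa_plus_def)
  show "c_H H = Min {l \<in> eigvals H. l > 0} / (lambda_max H)^2"
    using L by (simp add: c_H_def k power2_eq_square)
  show "\<forall>x. x \<bullet> (H *v x) \<le> lambda_max H * (norm x)^2" by (rule lmax_facts(1)[OF sym r0])
qed

lemma resid_IV:
  fixes H :: "real^'m^'m"
  assumes sym: "transpose H = H" and psd: "\<forall>x. 0 \<le> x \<bullet> (H *v x)" and Hr0: "H *v r0 \<noteq> 0"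
  shows "(norm (resid H r0 k))^2 \<le> (norm r0)^2 - c_H H * (\<Sum>j<k. resid H r0 j \<bullet> (H *v resid H r0 j))"
proof -
  define M where "M = lambda_max H"
  define m where "m = Min {l \<in> eigvals H. l > 0}"
  note C = consts_facts[OF sym psd Hr0, folded M_def m_def]
  have r0: "r0 \<noteq> 0" using Hr0 by auto
  have Mp: "0 < M" using C by linarith
  have step: "(norm (F1 H r))^2 \<le> (norm r)^2 - c_H H * (r \<bullet> (H *v r))" for r
  proof -
    define a where "a = r \<bullet> (H *v r)"
    define h where "h = (norm (H *v r))^2"
    have a0: "0 \<le> a" using psd a_def by simp
    have hM: "h \<le> M * a" using HM_bound[OF sym psd r0, of r] unfolding h_def a_def M_def .
    have c: "c_H H * a \<le> a^2 / h"
    proof (cases "a = 0")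
      case True then show ?thesis by simp
    next
      case False
      then have ap: "a > 0" using a0 by simp
      have "h \<noteq> 0" using False unfolding h_def a_def by auto
      then have hp: "h > 0" unfolding h_def by simp
      have "c_H H * M = m / M" using C Mp by (simp add: power2_eq_square)
      also have "\<dots> \<le> 1" using C Mp by simp
      finally have "c_H H \<le> 1 / M" using Mp by (simp add: le_divide_eq)
      then have "c_H H * a \<le> a / M" using ap by (simp add: mult_right_mono divide_inverse)
      also have "a / M \<le> a^2 / h" using hM ap hp Mp by (simp add: divide_simps power2_eq_square mult.commute)
      finally show ?thesis .
    qed
    show ?thesis using F1_norm[OF sym, of r] c unfolding a_def h_def by simp
  qed
  show ?thesis
  proof (induction k)
    case 0 then show ?case by simp
  next
    case (Suc k)
    then show ?case using step[of "resid H r0 k"] by (simp add: algebra_simps)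
  qed
qed


lemma kant_real:
  fixes a h n M m :: real
  assumes K: "h + m*M*n \<le> (M+m)*a" and hp: "0 < h" and n: "0 \<le> n" and m: "0 < m" "m \<le> M"
  shows "n - a^2/h \<le> ((M-m)/(M+m))^2 * n"
proof -
  have Mm: "0 < M + m" using m by simp
  have eq: "(h + m*M*n)^2 = (h - m*M*n)^2 + 4*m*M*h*n" by (simp add: power2_eq_square algebra_simps)
  have "4*m*M*h*n \<le> (h + m*M*n)^2" unfolding eq using zero_le_power2[of "h - m*M*n"] by linarith
  also have "\<dots> \<le> ((M+m)*a)^2" using K hp n m by (intro power_mono) (auto intro: add_nonneg_nonneg)
  finally have 1: "4*m*M*h*n \<le> (M+m)^2 * a^2" by (simp add: power_mult_distrib)
  have "n - a^2/h \<le> n - 4*m*M*n/(M+m)^2"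
  proof -
    have "4*m*M*n/(M+m)^2 \<le> a^2/h" using 1 hp Mm
      by (simp add: divide_simps mult_ac)
    then show ?thesis by simp
  qed
  also have "\<dots> = ((M-m)/(M+m))^2 * n"
  proof -
    have D: "(M+m)^2 \<noteq> 0" using Mm by simp
    have "n - 4*m*M*n/(M+m)^2 = ((M+m)^2*n - 4*m*M*n)/(M+m)^2" using D by (simp add: diff_divide_distrib)
    also have "(M+m)^2*n - 4*m*M*n = (M-m)^2*n" by (simp add: power2_eq_square algebra_simps)
    also have "(M-m)^2*n/(M+m)^2 = ((M-m)/(M+m))^2 * n" by (simp add: power_divide)
    finally show ?thesis .
  qed
  finally show ?thesis .
qed

lemma resid_II:
  fixes H :: "real^'m^'m"
  assumes sym: "transpose H = H" and psd: "\<forall>x. 0 \<le> x \<bullet> (H *v x)" and Hr0: "H *v r0 \<noteq> 0"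
    and S: "subspace S" and inv: "\<forall>x\<in>S. H *v x \<in> S" and nf: "\<forall>x\<in>S. H *v x = 0 \<longrightarrow> x = 0"
    and r0S: "r0 \<in> S"
  shows "norm (resid H r0 k) \<le> ((kappa_plus H - 1) / (kappa_plus H + 1)) ^ k * norm r0"
proof -
  define M where "M = lambda_max H"
  define m where "m = Min {l \<in> eigvals H. l > 0}"
  note C = consts_facts[OF sym psd Hr0, folded M_def m_def]
  have r0: "r0 \<noteq> 0" using Hr0 by auto
  have lb: "\<forall>x\<in>S. m * (norm x)^2 \<le> x \<bullet> (H *v x)"
    using lmin_facts(1)[OF sym psd S inv nf r0S r0] unfolding m_def .
  have q: "(kappa_plus H - 1) / (kappa_plus H + 1) = (M - m) / (M + m)"
  proof -
    have "M/m - 1 = (M-m)/m" "M/m + 1 = (M+m)/m" using C by (simp_all add: field_simps)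
    then show ?thesis using C by simp
  qed
  have q0: "0 \<le> (M - m) / (M + m)" using C by simp
  interpret g: sadj "\<lambda>x. - (m *\<^sub>R x - H *v x)"
    using sadj_neg[OF sadj_shift[OF mat_sadj[OF sym]]] .
  have gS: "\<forall>x\<in>S. - (m *\<^sub>R x - H *v x) \<in> S" using S inv by (simp add: subspace_neg subspace_diff subspace_scale)
  have gpsd: "\<forall>x\<in>S. 0 \<le> x \<bullet> (- (m *\<^sub>R x - H *v x))"
    using lb by (simp add: inner_diff_right power2_norm_eq_inner)
  have gub: "\<forall>y\<in>S. y \<bullet> (- (m *\<^sub>R y - H *v y)) \<le> (M - m) * (norm y)^2"
    using C(5) by (simp add: inner_diff_right power2_norm_eq_inner M_def algebra_simps)
  have kant: "(norm (H *v x))^2 + m*M*(norm x)^2 \<le> (M+m) * (x \<bullet> (H *v x))" if x: "x \<in> S" for x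
  proof -
    have "(norm (- (m *\<^sub>R x - H *v x)))^2 \<le> (M - m) * (x \<bullet> (- (m *\<^sub>R x - H *v x)))"
      by (rule g.bound_on[OF S gpsd gS gub _ x]) (use C in simp)
    moreover have "(norm (- (m *\<^sub>R x - H *v x)))^2 = (H *v x) \<bullet> (H *v x) - 2*m*(x \<bullet> (H *v x)) + m*m * (x \<bullet> x)"
      unfolding power2_norm_eq_inner
      by (simp add: inner_diff_left inner_diff_right inner_commute[of "H *v x" x] algebra_simps)
    moreover have "x \<bullet> (- (m *\<^sub>R x - H *v x)) = x \<bullet> (H *v x) - m * (x \<bullet> x)"
      by (simp add: inner_diff_right)
    ultimately show ?thesis unfolding power2_norm_eq_inner by (simp add: algebra_simps inner_commute[of "H *v x" x])
  qed
  have step: "norm (F1 H r) \<le> (M - m) / (M + m) * norm r" if r: "r \<in> S" for r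
  proof -
    have "(norm (F1 H r))^2 \<le> ((M - m) / (M + m))^2 * (norm r)^2"
    proof (cases "H *v r = 0")
      case True
      then have "r = 0" using nf r by blast
      then show ?thesis by (simp add: F1_def)
    next
      case False
      then show ?thesis unfolding F1_norm[OF sym]
        by (intro kant_real) (use kant[OF r] C in \<open>auto simp: algebra_simps\<close>)
    qed
    also have "\<dots> = ((M - m) / (M + m) * norm r)^2" by (simp only: power_mult_distrib)
    finally have sq: "(norm (F1 H r))^2 \<le> ((M - m) / (M + m) * norm r)^2" .
    show ?thesis by (rule power2_le_imp_le[OF sq mult_nonneg_nonneg[OF q0 norm_ge_zero]])
  qed
  have "resid H r0 k \<in> S \<and> norm (resid H r0 k) \<le> ((M - m) / (M + m)) ^ k * norm r0"
  proof (induction k)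
    case 0 then show ?case using r0S by simp
  next
    case (Suc k)
    have rS: "resid H r0 k \<in> S" using Suc.IH by blast
    have "norm (resid H r0 (Suc k)) \<le> (M - m) / (M + m) * norm (resid H r0 k)"
      using step[OF rS] by (simp only: resid.simps)
    also have "\<dots> \<le> (M - m) / (M + m) * (((M - m) / (M + m)) ^ k * norm r0)"
      using Suc.IH q0 by (intro mult_left_mono) auto
    also have "\<dots> = ((M - m) / (M + m)) ^ Suc k * norm r0" by (simp only: power_Suc mult.assoc)
    finally have "norm (resid H r0 (Suc k)) \<le> ((M - m) / (M + m)) ^ Suc k * norm r0" .
    moreover have "resid H r0 (Suc k) \<in> S" using F1_in[OF S inv rS] by (simp only: resid.simps)
    ultimately show ?case by blast
  qed
  then show ?thesis using q by simp
qed



lemma resid_x: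
  assumes AD: "\<forall>v. A *v D v = H *v v" and r0: "r0 = b - A *v x0"
  shows "resid H r0 k = b - A *v iter_x H D x0 r0 k"
proof (induction k)
  case 0 then show ?case using r0 by simp
next
  case (Suc k)
  show ?case using Suc AD
    by (simp add: F1_def alpha11_def matrix_vector_right_distrib matrix_vector_mult_scaleR algebra_simps)
qed

lemma conv_real:
  fixes \<kappa> n0 rk \<epsilon> :: real and k :: nat
  assumes rk: "rk \<le> ((\<kappa> - 1) / (\<kappa> + 1)) ^ k * n0" and n0: "0 \<le> n0" and kap: "1 \<le> \<kappa>"
    and e: "0 < \<epsilon>" and kL: "real k \<ge> \<kappa> * ln (n0 / \<epsilon>)"
  shows "rk \<le> \<epsilon>"
proof -
  define q where "q = (\<kappa> - 1) / (\<kappa> + 1)"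
  have q0: "0 \<le> q" and q1: "q < 1" using kap by (auto simp: q_def divide_simps)
  show ?thesis
  proof (cases "n0 \<le> \<epsilon>")
    case True
    have "q ^ k \<le> 1" using q0 q1 by (simp add: power_le_one)
    then have "q ^ k * n0 \<le> n0" by (metis mult_left_le_one_le n0 q0 zero_le_power)
    then show ?thesis using rk True q_def by simp
  next
    case False
    then have n0p: "n0 > 0" using e by simp
    define L where "L = ln (n0 / \<epsilon>)"
    have Lp: "L > 0" using False e unfolding L_def by simp
    have kp: "real k > 0" using kL kap Lp unfolding L_def[symmetric]
      by (smt (verit) mult_pos_pos)
    have "q ^ k \<le> \<epsilon> / n0"
    proof (cases "q = 0")
      case True then show ?thesis using kp e n0p by (simp add: zero_power)
    next
      case False
      then have qp: "q > 0" using q0 by simp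
      have "ln q \<le> q - 1" using qp by (rule ln_le_minus_one)
      also have "q - 1 = - 2 / (\<kappa> + 1)" using kap by (simp add: q_def field_simps)
      also have "\<dots> \<le> - 1 / \<kappa>" using kap by (simp add: divide_simps)
      finally have lq: "ln q \<le> - 1 / \<kappa>" .
      have "real k * ln q \<le> real k * (- 1 / \<kappa>)" using mult_left_mono[OF lq, of "real k"] kp by simp
      also have "\<dots> \<le> - L" using kL kap unfolding L_def[symmetric] by (simp add: divide_simps mult.commute)
      finally have "real k * ln q \<le> - L" .
      then have "exp (real k * ln q) \<le> exp (- L)" by simp
      moreover have "exp (real k * ln q) = q ^ k" using qp by (simp add: exp_of_nat_mult)
      moreover have "exp (- L) = \<epsilon> / n0" unfolding L_def using e n0p by (simp add: exp_minus)
      ultimately show ?thesis by simp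
    qed
    then have "q ^ k * n0 \<le> \<epsilon>" using n0p by (simp add: le_divide_eq)
    then show ?thesis using rk q_def by simp
  qed
qed



lemma generic:
  fixes H :: "real^'m^'m" and A :: "real^'n^'m" and D :: "real^'m \<Rightarrow> real^'n"
  assumes sym: "transpose H = H" and psd: "\<forall>x. 0 \<le> x \<bullet> (H *v x)"
    and AD: "\<forall>v. A *v D v = H *v v" and k1: "k \<ge> 1" and nz: "\<forall>j<k. H *v resid H r0 j \<noteq> 0"
    and r0: "r0 = b - A *v x0"
    and solv: "(\<exists>z. A *v z = b) \<longrightarrow> (\<exists>S. subspace S \<and> (\<forall>x\<in>S. H *v x \<in> S) \<and> (\<forall>x\<in>S. H *v x = 0 \<longrightarrow> x = 0) \<and> r0 \<in> S)"
  shows "(resid H r0 k = b - A *v iter_x H D x0 r0 k)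
      \<and> ((\<exists>z. A *v z = b) \<longrightarrow> norm (resid H r0 k) \<le> ((kappa_plus H - 1) / (kappa_plus H + 1)) ^ k * norm r0)
      \<and> (\<forall>\<epsilon>. (\<exists>z. A *v z = b) \<and> 0 < \<epsilon> \<and> \<epsilon> < 1 \<and> real k \<ge> kappa_plus H * ln (norm r0 / \<epsilon>) \<longrightarrow> norm (resid H r0 k) \<le> \<epsilon>)
      \<and> (norm (resid H r0 k))\<^sup>2 \<le> (norm r0)\<^sup>2 - c_H H * (\<Sum>j<k. resid H r0 j \<bullet> (H *v resid H r0 j))
      \<and> (\<forall>\<epsilon>. 0 < \<epsilon> \<and> \<epsilon> < 1 \<and> (\<forall>j<k. resid H r0 j \<bullet> (H *v resid H r0 j) > \<epsilon>) \<longrightarrow> real k \<le> kappa_plus H * lambda_max H * (norm r0)\<^sup>2 / \<epsilon>)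
      \<and> (\<forall>\<epsilon>. norm (resid H r0 k) \<le> \<epsilon> \<longrightarrow> norm (A *v iter_x H D x0 r0 k - b) \<le> \<epsilon>)"
proof -
  have Hr0: "H *v r0 \<noteq> 0" using nz k1 by (metis less_le_trans resid.simps(1) zero_less_one)
  define M where "M = lambda_max H"
  define m where "m = Min {l \<in> eigvals H. l > 0}"
  note C = consts_facts[OF sym psd Hr0, folded M_def m_def]
  have kap1: "1 \<le> kappa_plus H" using C by simp
  have I: "resid H r0 k = b - A *v iter_x H D x0 r0 k" by (rule resid_x[OF AD r0])
  have II: "(\<exists>z. A *v z = b) \<longrightarrow> norm (resid H r0 k) \<le> ((kappa_plus H - 1) / (kappa_plus H + 1)) ^ k * norm r0"
  proof
    assume "\<exists>z. A *v z = b"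
    then obtain S where "subspace S" "\<forall>x\<in>S. H *v x \<in> S" "\<forall>x\<in>S. H *v x = 0 \<longrightarrow> x = 0" "r0 \<in> S"
      using solv by blast
    then show "norm (resid H r0 k) \<le> ((kappa_plus H - 1) / (kappa_plus H + 1)) ^ k * norm r0"
      using resid_II[OF sym psd Hr0] by blast
  qed
  have III: "\<forall>\<epsilon>. (\<exists>z. A *v z = b) \<and> 0 < \<epsilon> \<and> \<epsilon> < 1 \<and> real k \<ge> kappa_plus H * ln (norm r0 / \<epsilon>) \<longrightarrow> norm (resid H r0 k) \<le> \<epsilon>"
    using II conv_real kap1 by auto
  have IV: "(norm (resid H r0 k))\<^sup>2 \<le> (norm r0)\<^sup>2 - c_H H * (\<Sum>j<k. resid H r0 j \<bullet> (H *v resid H r0 j))"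
    by (rule resid_IV[OF sym psd Hr0])
  have V: "\<forall>\<epsilon>. 0 < \<epsilon> \<and> \<epsilon> < 1 \<and> (\<forall>j<k. resid H r0 j \<bullet> (H *v resid H r0 j) > \<epsilon>) \<longrightarrow> real k \<le> kappa_plus H * lambda_max H * (norm r0)\<^sup>2 / \<epsilon>"
  proof (intro allI impI)
    fix \<epsilon> :: real assume e: "0 < \<epsilon> \<and> \<epsilon> < 1 \<and> (\<forall>j<k. resid H r0 j \<bullet> (H *v resid H r0 j) > \<epsilon>)"
    have Mp: "0 < M" using C by linarith
    have cH: "c_H H = m / M^2" using C by simp
    have cp: "0 < c_H H" using cH C Mp by simp
    have kM: "kappa_plus H * lambda_max H = 1 / c_H H" using C Mp unfolding cH M_def[symmetric]
      by (simp add: power2_eq_square)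
    have "real k * \<epsilon> \<le> (\<Sum>j<k. resid H r0 j \<bullet> (H *v resid H r0 j))"
      using sum_bounded_below[of "{..<k}" \<epsilon> "\<lambda>j. resid H r0 j \<bullet> (H *v resid H r0 j)"] e by force
    then have "c_H H * (real k * \<epsilon>) \<le> c_H H * (\<Sum>j<k. resid H r0 j \<bullet> (H *v resid H r0 j))"
      using cp by (simp add: mult_left_mono)
    also have "\<dots> \<le> (norm r0)^2" using IV zero_le_power2[of "norm (resid H r0 k)"] by linarith
    finally have "real k \<le> (norm r0)^2 / (c_H H * \<epsilon>)" using cp e by (simp add: le_divide_eq mult_ac)
    then show "real k \<le> kappa_plus H * lambda_max H * (norm r0)\<^sup>2 / \<epsilon>" unfolding kM by simp
  qed
  have VI: "\<forall>\<epsilon>. norm (resid H r0 k) \<le> \<epsilon> \<longrightarrow> norm (A *v iter_x H D x0 r0 k - b) \<le> \<epsilon>"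
    using I by (simp add: norm_minus_commute)
  show ?thesis using I II III IV V VI by blast
qed

lemma tdot: "(transpose A *v u) \<bullet> y = u \<bullet> (A *v (y::real^'n))" for A :: "real^'n^'m"
  by (metis dot_lmul_matrix transpose_matrix_vector)

lemma range_A_sub:
  fixes A :: "real^'n^'m"
  shows "subspace (range ((*v) A))"
  unfolding subspace_def
  by (auto simp: image_iff intro: exI[of _ 0])
     (metis matrix_vector_right_distrib, metis matrix_vector_mult_scaleR)



lemma case1:
  fixes A :: "real^'n^'m" and b w0 :: "real^'m" and k :: nat
  shows "let H = A ** transpose A;
         x0 = transpose A *v w0;
         r0 = b - A *v x0;
         r = resid H r0;
         x = iter_x H (\<lambda>v. transpose A *v v) x0 r0
     in (k \<ge> 1 \<and> (\<forall>j<k. H *v r j \<noteq> 0)) \<longrightarrow>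
        (r k = b - A *v x k)
      \<and> ((\<exists>z. A *v z = b) \<longrightarrow>
            norm (r k) \<le> ((kappa_plus H - 1) / (kappa_plus H + 1)) ^ k * norm r0)
      \<and> (\<forall>\<epsilon>. (\<exists>z. A *v z = b) \<and> 0 < \<epsilon> \<and> \<epsilon> < 1 \<and>
               real k \<ge> kappa_plus H * ln (norm r0 / \<epsilon>) \<longrightarrow> norm (r k) \<le> \<epsilon>)
      \<and> (norm (r k))\<^sup>2 \<le> (norm r0)\<^sup>2 - c_H H * (\<Sum>j<k. r j \<bullet> (H *v r j))
      \<and> (\<forall>\<epsilon>. 0 < \<epsilon> \<and> \<epsilon> < 1 \<and> (\<forall>j<k. r j \<bullet> (H *v r j) > \<epsilon>) \<longrightarrow>
               real k \<le> kappa_plus H * lambda_max H * (norm r0)\<^sup>2 / \<epsilon>)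
      \<and> (\<forall>\<epsilon>. norm (r k) \<le> \<epsilon> \<longrightarrow> norm (A *v x k - b) \<le> \<epsilon>)
      \<and> (\<forall>\<epsilon>. r k \<bullet> (H *v r k) \<le> \<epsilon> \<longrightarrow>
               norm ((transpose A ** A) *v x k - transpose A *v b) \<le> sqrt \<epsilon>)"
  unfolding Let_def
apply (intro impI)
  subgoal premises P
  proof -
  let ?H = "A ** transpose A"
  let ?x0 = "transpose A *v w0"
  let ?rz = "b - A *v ?x0"
  have Hv: "?H *v v = A *v (transpose A *v v)" for v by (rule matrix_vector_mul_assoc[symmetric])
  have sym: "transpose ?H = ?H" by (simp add: matrix_transpose_mul)
  have quad: "x \<bullet> (?H *v x) = (transpose A *v x) \<bullet> (transpose A *v x)" for x
    unfolding Hv by (rule tdot[symmetric])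
  have psd: "\<forall>x. 0 \<le> x \<bullet> (?H *v x)" unfolding quad by simp
  have AD: "\<forall>v. A *v ((\<lambda>v. transpose A *v v) v) = ?H *v v" by (simp add: Hv)
  have solv: "(\<exists>z. A *v z = b) \<longrightarrow> (\<exists>S. subspace S \<and> (\<forall>x\<in>S. ?H *v x \<in> S) \<and> (\<forall>x\<in>S. ?H *v x = 0 \<longrightarrow> x = 0) \<and> ?rz \<in> S)"
  proof
    assume solvz: "\<exists>z. A *v z = b"
    obtain z where z: "A *v z = b" using solvz by blast
    have inv: "\<forall>x\<in>range ((*v) A). ?H *v x \<in> range ((*v) A)" by (auto simp: Hv)
    have nf: "\<forall>x\<in>range ((*v) A). ?H *v x = 0 \<longrightarrow> x = 0"
    proof clarify
      fix y assume h: "?H *v (A *v y) = 0"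
      define u where "u = transpose A *v (A *v y)"
      have Au: "A *v u = 0" using h unfolding u_def Hv .
      have "u \<bullet> u = (A *v y) \<bullet> (A *v u)" unfolding u_def by (rule tdot)
      then have "u = 0" using Au by simp
      have "(A *v y) \<bullet> (A *v y) = u \<bullet> y" unfolding u_def by (rule tdot[symmetric])
      then show "A *v y = 0" using \<open>u = 0\<close> by simp
    qed
    have "?rz = A *v (z - ?x0)" using z by (simp add: matrix_vector_mult_diff_distrib)
    then have "?rz \<in> range ((*v) A)" by blast
    then show "\<exists>S. subspace S \<and> (\<forall>x\<in>S. ?H *v x \<in> S) \<and> (\<forall>x\<in>S. ?H *v x = 0 \<longrightarrow> x = 0) \<and> ?rz \<in> S" using range_A_sub inv nf by blast
  qed
  note G = generic[where D = "\<lambda>v. transpose A *v v", OF sym psd AD conjunct1[OF P] conjunct2[OF P] refl solv]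
  let ?rk = "resid ?H ?rz k"
  let ?x = "iter_x ?H (\<lambda>v. transpose A *v v) ?x0 ?rz k"
  have VIb: "\<forall>\<epsilon>. ?rk \<bullet> (?H *v ?rk) \<le> \<epsilon> \<longrightarrow> norm ((transpose A ** A) *v ?x - transpose A *v b) \<le> sqrt \<epsilon>"
  proof (intro allI impI)
    fix \<epsilon> assume e: "?rk \<bullet> (?H *v ?rk) \<le> \<epsilon>"
    have I: "?rk = b - A *v ?x" using G by blast
    have eq: "(transpose A ** A) *v ?x - transpose A *v b = - (transpose A *v ?rk)"
      unfolding I by (simp add: matrix_vector_mult_diff_distrib matrix_vector_mul_assoc del: transpose_matrix_vector)
    have "(norm ((transpose A ** A) *v ?x - transpose A *v b))^2 = ?rk \<bullet> (?H *v ?rk)"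
      unfolding eq quad by (simp add: power2_norm_eq_inner del: transpose_matrix_vector)
    then show "norm ((transpose A ** A) *v ?x - transpose A *v b) \<le> sqrt \<epsilon>"
      using e by (intro real_le_rsqrt) simp
  qed
  show ?thesis using G VIb by blast
  qed
  done

lemma case2:
  fixes A :: "real^'m^'m" and b w0 :: "real^'m" and k :: nat
  shows "let H = A;
         x0 = transpose A *v w0;
         r0 = b - A *v x0;
         r = resid H r0;
         x = iter_x H (\<lambda>v. v) x0 r0
     in (sym_psd A \<and> k \<ge> 1 \<and> (\<forall>j<k. H *v r j \<noteq> 0)) \<longrightarrow>
        (r k = b - A *v x k)
      \<and> ((\<exists>z. A *v z = b) \<longrightarrow>
            norm (r k) \<le> ((kappa_plus H - 1) / (kappa_plus H + 1)) ^ k * norm r0)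
      \<and> (\<forall>\<epsilon>. (\<exists>z. A *v z = b) \<and> 0 < \<epsilon> \<and> \<epsilon> < 1 \<and>
               real k \<ge> kappa_plus H * ln (norm r0 / \<epsilon>) \<longrightarrow> norm (r k) \<le> \<epsilon>)
      \<and> (norm (r k))\<^sup>2 \<le> (norm r0)\<^sup>2 - c_H H * (\<Sum>j<k. r j \<bullet> (H *v r j))
      \<and> (\<forall>\<epsilon>. 0 < \<epsilon> \<and> \<epsilon> < 1 \<and> (\<forall>j<k. r j \<bullet> (H *v r j) > \<epsilon>) \<longrightarrow>
               real k \<le> kappa_plus H * lambda_max H * (norm r0)\<^sup>2 / \<epsilon>)
      \<and> (\<forall>\<epsilon>. norm (r k) \<le> \<epsilon> \<longrightarrow> norm (A *v x k - b) \<le> \<epsilon>)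
      \<and> (\<forall>\<epsilon>. r k \<bullet> (H *v r k) \<le> \<epsilon> \<longrightarrow>
               norm ((transpose A ** A) *v x k - transpose A *v b)
                 \<le> sqrt \<epsilon> * sqrt (onorm (\<lambda>v. A *v v)))"
  unfolding Let_def
apply (intro impI)
  subgoal premises P
  proof -
  let ?x0 = "transpose A *v w0"
  let ?rz = "b - A *v ?x0"
  have sym: "transpose A = A" and psd: "\<forall>x. 0 \<le> x \<bullet> (A *v x)" using P by (auto simp: sym_psd_def)
  have AD: "\<forall>v. A *v ((\<lambda>v. v) v) = A *v v" by simp
  note R = range_sub[OF sym]
  have solv: "(\<exists>z. A *v z = b) \<longrightarrow> (\<exists>S. subspace S \<and> (\<forall>x\<in>S. A *v x \<in> S) \<and> (\<forall>x\<in>S. A *v x = 0 \<longrightarrow> x = 0) \<and> ?rz \<in> S)"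
  proof
    assume solvz: "\<exists>z. A *v z = b"
    obtain z where z: "A *v z = b" using solvz by blast
    have "?rz = A *v (z - ?x0)" using z by (simp add: matrix_vector_mult_diff_distrib)
    then have "?rz \<in> range ((*v) A)" by blast
    then show "\<exists>S. subspace S \<and> (\<forall>x\<in>S. A *v x \<in> S) \<and> (\<forall>x\<in>S. A *v x = 0 \<longrightarrow> x = 0) \<and> ?rz \<in> S" using R by blast
  qed
  note G = generic[where D = "\<lambda>v. v", OF sym psd AD conjunct1[OF conjunct2[OF P]] conjunct2[OF conjunct2[OF P]] refl solv]
  let ?rk = "resid A ?rz k"
  let ?x = "iter_x A (\<lambda>v. v) ?x0 ?rz k"
  have VIb: "\<forall>\<epsilon>. ?rk \<bullet> (A *v ?rk) \<le> \<epsilon> \<longrightarrow> norm ((transpose A ** A) *v ?x - transpose A *v b) \<le> sqrt \<epsilon> * sqrt (onorm (\<lambda>v. A *v v))"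
  proof (intro allI impI)
    fix \<epsilon> assume e: "?rk \<bullet> (A *v ?rk) \<le> \<epsilon>"
    interpret sadj "(*v) A" by (rule mat_sadj[OF sym])
    have bl: "bounded_linear ((*v) A)" by simp
    have on0: "0 \<le> onorm ((*v) A)" by (rule onorm_pos_le[OF bl])
    have ub: "\<forall>y\<in>UNIV. y \<bullet> (A *v y) \<le> onorm ((*v) A) * (norm y)^2"
    proof
      fix y :: "real^'m"
      have "y \<bullet> (A *v y) \<le> norm y * norm (A *v y)" by (rule norm_cauchy_schwarz)
      also have "\<dots> \<le> norm y * (onorm ((*v) A) * norm y)" by (intro mult_left_mono onorm[OF bl]) simp
      finally show "y \<bullet> (A *v y) \<le> onorm ((*v) A) * (norm y)^2" by (simp add: power2_eq_square mult_ac)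
    qed
    have bnd: "(norm (A *v ?rk))^2 \<le> onorm ((*v) A) * (?rk \<bullet> (A *v ?rk))"
      using bound_on[of UNIV "onorm ((*v) A)" ?rk] ub psd on0 by auto
    have I: "?rk = b - A *v ?x" using G by blast
    have eq: "(transpose A ** A) *v ?x - transpose A *v b = - (A *v ?rk)"
      unfolding I by (simp add: sym matrix_vector_mult_diff_distrib matrix_vector_mul_assoc del: transpose_matrix_vector)
    have "(norm ((transpose A ** A) *v ?x - transpose A *v b))^2 \<le> onorm ((*v) A) * \<epsilon>"
      unfolding eq using bnd e on0 by (simp add: order_trans[OF _ mult_left_mono])
    then have "norm ((transpose A ** A) *v ?x - transpose A *v b) \<le> sqrt (onorm ((*v) A) * \<epsilon>)"
      by (rule real_le_rsqrt)
    then show "norm ((transpose A ** A) *v ?x - transpose A *v b) \<le> sqrt \<epsilon> * sqrt (onorm (\<lambda>v. A *v v))"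
      by (simp add: real_sqrt_mult mult.commute)
  qed
  show ?thesis using G VIb by blast
  qed
  done

theorem mainTheorem5:
  shows
  "(\<forall>(A::real^'n^'m) (b::real^'m) (w0::real^'m) (k::nat).
     let H = A ** transpose A;
         x0 = transpose A *v w0;
         r0 = b - A *v x0;
         r = resid H r0;
         x = iter_x H (\<lambda>v. transpose A *v v) x0 r0
     in (k \<ge> 1 \<and> (\<forall>j<k. H *v r j \<noteq> 0)) \<longrightarrow>
        (r k = b - A *v x k)
      \<and> ((\<exists>z. A *v z = b) \<longrightarrow>
            norm (r k) \<le> ((kappa_plus H - 1) / (kappa_plus H + 1)) ^ k * norm r0)
      \<and> (\<forall>\<epsilon>. (\<exists>z. A *v z = b) \<and> 0 < \<epsilon> \<and> \<epsilon> < 1 \<and>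
               real k \<ge> kappa_plus H * ln (norm r0 / \<epsilon>) \<longrightarrow> norm (r k) \<le> \<epsilon>)
      \<and> (norm (r k))\<^sup>2 \<le> (norm r0)\<^sup>2 - c_H H * (\<Sum>j<k. r j \<bullet> (H *v r j))
      \<and> (\<forall>\<epsilon>. 0 < \<epsilon> \<and> \<epsilon> < 1 \<and> (\<forall>j<k. r j \<bullet> (H *v r j) > \<epsilon>) \<longrightarrow>
               real k \<le> kappa_plus H * lambda_max H * (norm r0)\<^sup>2 / \<epsilon>)
      \<and> (\<forall>\<epsilon>. norm (r k) \<le> \<epsilon> \<longrightarrow> norm (A *v x k - b) \<le> \<epsilon>)
      \<and> (\<forall>\<epsilon>. r k \<bullet> (H *v r k) \<le> \<epsilon> \<longrightarrow>
               norm ((transpose A ** A) *v x k - transpose A *v b) \<le> sqrt \<epsilon>))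
   \<and>
   (\<forall>(A::real^'m^'m) (b::real^'m) (w0::real^'m) (k::nat).
     let H = A;
         x0 = transpose A *v w0;
         r0 = b - A *v x0;
         r = resid H r0;
         x = iter_x H (\<lambda>v. v) x0 r0
     in (sym_psd A \<and> k \<ge> 1 \<and> (\<forall>j<k. H *v r j \<noteq> 0)) \<longrightarrow>
        (r k = b - A *v x k)
      \<and> ((\<exists>z. A *v z = b) \<longrightarrow>
            norm (r k) \<le> ((kappa_plus H - 1) / (kappa_plus H + 1)) ^ k * norm r0)
      \<and> (\<forall>\<epsilon>. (\<exists>z. A *v z = b) \<and> 0 < \<epsilon> \<and> \<epsilon> < 1 \<and>
               real k \<ge> kappa_plus H * ln (norm r0 / \<epsilon>) \<longrightarrow> norm (r k) \<le> \<epsilon>)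
      \<and> (norm (r k))\<^sup>2 \<le> (norm r0)\<^sup>2 - c_H H * (\<Sum>j<k. r j \<bullet> (H *v r j))
      \<and> (\<forall>\<epsilon>. 0 < \<epsilon> \<and> \<epsilon> < 1 \<and> (\<forall>j<k. r j \<bullet> (H *v r j) > \<epsilon>) \<longrightarrow>
               real k \<le> kappa_plus H * lambda_max H * (norm r0)\<^sup>2 / \<epsilon>)
      \<and> (\<forall>\<epsilon>. norm (r k) \<le> \<epsilon> \<longrightarrow> norm (A *v x k - b) \<le> \<epsilon>)
      \<and> (\<forall>\<epsilon>. r k \<bullet> (H *v r k) \<le> \<epsilon> \<longrightarrow>
               norm ((transpose A ** A) *v x k - transpose A *v b)
                 \<le> sqrt \<epsilon> * sqrt (onorm (\<lambda>v. A *v v))))"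
  apply (intro conjI allI)
   apply (rule case1)
  apply (rule case2)
  done

end
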